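(* Let $p,q\ge0$ with $p+q<1$, let $\varepsilon>0$, let $h$ denote the binary entropy in nats, $h(x)=-x\log x-(1-x)\log(1-x)$, and put $\phi=\phi(p,q)=\frac{h(p)-h(q)}{1-p-q}$. Define \[ m_{\mathrm{COUNT}}=\frac{1}{D_{\mathrm{KL}}\big(q\,\|\,1/(1+e^{\phi})\big)}\;k\log(n/k). \] If $m\le(1-\varepsilon)m_{\mathrm{COUNT}}$, then no algorithm can recover $\sigma$ with high probability, for any (non-adaptive) test design with $m$ tests.
   Context: Noisy group testing model: $n$ individuals, $k\sim n^{\theta}$ infected for a fixed $\theta\in(0,1)$; the infection vector $\sigma\in\{0,1\}^n$ is uniformly random among vectors of Hamming weight $k$. Each of the $m$ tests is a pool of individuals; it is truly positive if the pool contains at least one infected individual and truly negative otherwise. The observed result of each test is obtained independently: a truly negative test is displayed positive with probability $p$, a truly positive test is displayed negative with probability $q$. The algorithm sees the test design and the displayed results. $\log$ is natural; $D_{\mathrm{KL}}(r\|s)=r\log(r/s)+(1-r)\log\frac{1-r}{1-s}$. "With high probability" means with probability tending to $1$ as $n\to\infty$. *)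

theory Defs
  imports "HOL-Analysis.Analysis"
begin

definition xlnx :: "real \<Rightarrow> real" where
  "xlnx x = (if x = 0 then 0 else x * ln x)"

definition bin_entropy :: "real \<Rightarrow> real" where
  "bin_entropy x = - xlnx x - xlnx (1 - x)"

definition DKL :: "real \<Rightarrow> real \<Rightarrow> real" where
  "DKL r s = (if r = 0 then 0 else r * ln (r / s))
           + (if r = 1 then 0 else (1 - r) * ln ((1 - r) / (1 - s)))"

definition phi :: "real \<Rightarrow> real \<Rightarrow> real" where
  "phi p q = (bin_entropy p - bin_entropy q) / (1 - p - q)"

definition m_count :: "real \<Rightarrow> real \<Rightarrow> nat \<Rightarrow> nat \<Rightarrow> real" where
  "m_count p q n k = 1 / DKL q (1 / (1 + exp (phi p q))) * real k * ln (real n / real k)"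

text \<open>Infection vectors: subsets of the n individuals {0..<n} of size k.\<close>
definition configs :: "nat \<Rightarrow> nat \<Rightarrow> nat set set" where
  "configs n k = {S. S \<subseteq> {..<n} \<and> card S = k}"

definition obs_prob :: "real \<Rightarrow> real \<Rightarrow> bool \<Rightarrow> bool \<Rightarrow> real" where
  "obs_prob p q tpos disp =
     (if tpos then (if disp then 1 - q else q) else (if disp then p else 1 - p))"

text \<open>Probability of displayed outcome Y (set of tests displayed positive,
  Y \<subseteq> {..<m}) given infected set \<sigma> and test design G (test i is pool G i).\<close>
definition outcome_prob :: "real \<Rightarrow> real \<Rightarrow> nat \<Rightarrow> (nat \<Rightarrow> nat set) \<Rightarrow> nat set \<Rightarrow> nat set \<Rightarrow> real" where
  "outcome_prob p q m G \<sigma> Y = (\<Prod>i<m. obs_prob p q (G i \<inter> \<sigma> \<noteq> {}) (i \<in> Y))"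

text \<open>Success probability of a (possibly randomised) decoder A: A Y \<sigma>' is the
  probability that A outputs \<sigma>' on displayed outcome Y; \<sigma> uniform on configs n k.\<close>
definition success_prob :: "real \<Rightarrow> real \<Rightarrow> nat \<Rightarrow> nat \<Rightarrow> nat \<Rightarrow> (nat \<Rightarrow> nat set)
    \<Rightarrow> (nat set \<Rightarrow> nat set \<Rightarrow> real) \<Rightarrow> real" where
  "success_prob p q n k m G A =
     (\<Sum>\<sigma>\<in>configs n k. \<Sum>Y\<in>Pow {..<m}. outcome_prob p q m G \<sigma> Y * A Y \<sigma>) / real (n choose k)"

text \<open>A valid randomised decoder (conditional distribution over outputs, sub-probability
  on the candidate configurations; mass elsewhere counts as failure).\<close>
definition valid_decoder :: "nat \<Rightarrow> nat \<Rightarrow> (nat set \<Rightarrow> nat set \<Rightarrow> real) \<Rightarrow> bool" where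
  "valid_decoder n k A \<longleftrightarrow> (\<forall>Y \<sigma>. 0 \<le> A Y \<sigma>) \<and> (\<forall>Y. (\<Sum>\<sigma>\<in>configs n k. A Y \<sigma>) \<le> 1)"

end

theory Submission
  imports Defs "HOL-Real_Asymp.Real_Asymp"
begin

lemma sum_pow_prod:
  fixes g :: "nat \<Rightarrow> bool \<Rightarrow> real"
  shows "(\<Sum>Y\<in>Pow {..<m}. \<Prod>i<m. g i (i \<in> Y)) = (\<Prod>i<m. g i True + g i False)"
proof -
  have "(\<Prod>i<m. g i True + g i False) =
     (\<Sum>X\<in>Pow {..<m}. (\<Prod>i\<in>X. g i True) * (\<Prod>i\<in>{..<m}-X. g i False))"
    by (rule prod_add) simp
  also have "\<dots> = (\<Sum>Y\<in>Pow {..<m}. \<Prod>i<m. g i (i \<in> Y))"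
  proof (rule sum.cong)
    fix X assume X: "X \<in> Pow {..<m}"
    have "(\<Prod>i<m. g i (i \<in> X)) = (\<Prod>i\<in>{..<m}-X. g i (i \<in> X)) * (\<Prod>i\<in>X. g i (i \<in> X))"
      using X by (intro prod.subset_diff) auto
    also have "\<dots> = (\<Prod>i\<in>{..<m}-X. g i False) * (\<Prod>i\<in>X. g i True)"
      by (intro arg_cong2[where f="(*)"] prod.cong) auto
    finally show "(\<Prod>i\<in>X. g i True) * (\<Prod>i\<in>{..<m}-X. g i False) = (\<Prod>i<m. g i (i \<in> X))"
      by simp
  qed simp
  finally show ?thesis by simp
qed

lemma pt_bound:
  fixes P Qy a s \<gamma> :: real
  assumes "0 \<le> P" "0 < Qy" "0 \<le> a" "0 < s"
  shows "P * a \<le> exp \<gamma> * Qy * a + exp (-s*\<gamma>) * (P * (P/Qy) powr s) * a"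
proof (cases "P \<le> exp \<gamma> * Qy")
  case True
  have "0 \<le> exp (-s*\<gamma>) * (P * (P/Qy) powr s) * a" using assms by simp
  moreover have "P * a \<le> exp \<gamma> * Qy * a" using True assms by (simp add: mult_right_mono)
  ultimately show ?thesis by linarith
next
  case False
  hence "exp \<gamma> \<le> P/Qy" using assms by (simp add: pos_le_divide_eq)
  hence "exp \<gamma> powr s \<le> (P/Qy) powr s" using assms by (intro powr_mono2) auto
  hence "exp (s*\<gamma>) \<le> (P/Qy) powr s" by (simp add: powr_def mult.commute)
  hence "exp (-s*\<gamma>) * exp (s*\<gamma>) \<le> exp (-s*\<gamma>) * (P/Qy) powr s" by simp
  hence "1 \<le> exp (-s*\<gamma>) * (P/Qy) powr s" by (simp add: exp_add[symmetric])
  hence "P * 1 \<le> P * (exp (-s*\<gamma>) * (P/Qy) powr s)" using assms by (intro mult_left_mono) auto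
  hence "P \<le> exp (-s*\<gamma>) * (P * (P/Qy) powr s)" by (simp add: algebra_simps)
  hence "P * a \<le> exp (-s*\<gamma>) * (P * (P/Qy) powr s) * a" using assms by (intro mult_right_mono) auto
  moreover have "0 \<le> exp \<gamma> * Qy * a" using assms by simp
  ultimately show ?thesis by linarith
qed

lemma obs_nonneg: "0 \<le> p \<Longrightarrow> p \<le> 1 \<Longrightarrow> 0 \<le> q \<Longrightarrow> q \<le> 1 \<Longrightarrow> 0 \<le> obs_prob p q x b"
  by (simp add: obs_prob_def)

lemma finite_configs: "finite (configs n k)"
  unfolding configs_def by (rule finite_subset[of _ "Pow {..<n}"]) auto

lemma card_configs: "card (configs n k) = n choose k"
  unfolding configs_def using n_subsets[of "{..<n}" k] by simp

lemma core_bound: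
  fixes p q s \<gamma> B :: real and Qf :: "bool \<Rightarrow> real"
  assumes pq: "0 \<le> p" "p \<le> 1" "0 \<le> q" "q \<le> 1"
  and Q: "\<And>b. 0 < Qf b" "Qf True + Qf False = 1"
  and s: "0 < s"
  and dec: "valid_decoder n k A" and kn: "k \<le> n"
  and fb: "\<And>x. obs_prob p q x True * (obs_prob p q x True / Qf True) powr s
              + obs_prob p q x False * (obs_prob p q x False / Qf False) powr s \<le> B"
  shows "success_prob p q n k m G A \<le> exp \<gamma> / real (n choose k) + exp (-s*\<gamma>) * B ^ m"
proof -
  let ?ob = "obs_prob p q"
  let ?C = "configs n k"
  let ?W = "Pow {..<m}"
  define P where "P \<sigma> Y = outcome_prob p q m G \<sigma> Y" for \<sigma> Y
  define QY where "QY Y = (\<Prod>i<m. Qf (i\<in>Y))" for Y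
  define g where "g \<sigma> i b = ?ob (G i \<inter> \<sigma> \<noteq> {}) b * (?ob (G i \<inter> \<sigma> \<noteq> {}) b / Qf b) powr s" for \<sigma> i b
  define T where "T \<sigma> Y = (\<Prod>i<m. g \<sigma> i (i\<in>Y))" for \<sigma> Y
  have obn: "\<And>x b. 0 \<le> ?ob x b" using pq by (rule obs_nonneg)
  have gn: "\<And>\<sigma> i b. 0 \<le> g \<sigma> i b" unfolding g_def using obn by simp
  have Bn: "0 \<le> B" using fb[of True] gn[unfolded g_def] obn by (smt (verit) powr_ge_zero mult_nonneg_nonneg)
  have Pn: "0 \<le> P \<sigma> Y" for \<sigma> Y unfolding P_def outcome_prob_def using obn by (simp add: prod_nonneg)
  have QYp: "0 < QY Y" for Y unfolding QY_def using Q by (simp add: prod_pos)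
  have T_eq: "T \<sigma> Y = P \<sigma> Y * (P \<sigma> Y / QY Y) powr s" for \<sigma> Y
  proof -
    have "(P \<sigma> Y / QY Y) powr s = (\<Prod>i<m. (?ob (G i \<inter> \<sigma> \<noteq> {}) (i\<in>Y) / Qf (i\<in>Y)) powr s)"
      unfolding P_def QY_def outcome_prob_def by (simp only: prod_dividef[symmetric] prod_powr_distrib)
    thus ?thesis unfolding T_def g_def P_def outcome_prob_def by (simp add: prod.distrib)
  qed
  have An: "0 \<le> A Y \<sigma>" for Y \<sigma> using dec by (simp add: valid_decoder_def)
  have As: "(\<Sum>\<sigma>\<in>?C. A Y \<sigma>) \<le> 1" for Y using dec by (simp add: valid_decoder_def)
  have A1: "A Y \<sigma> \<le> 1" if "\<sigma> \<in> ?C" for Y \<sigma>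
  proof -
    have "A Y \<sigma> \<le> (\<Sum>\<sigma>\<in>?C. A Y \<sigma>)" using that finite_configs An by (intro member_le_sum) auto
    thus ?thesis using As[of Y] by linarith
  qed
  have "(\<Sum>\<sigma>\<in>?C. \<Sum>Y\<in>?W. P \<sigma> Y * A Y \<sigma>) \<le>
        (\<Sum>\<sigma>\<in>?C. \<Sum>Y\<in>?W. exp \<gamma> * QY Y * A Y \<sigma> + exp (-s*\<gamma>) * T \<sigma> Y * A Y \<sigma>)"
    unfolding T_eq by (intro sum_mono pt_bound Pn QYp An s)
  also have "\<dots> = exp \<gamma> * (\<Sum>Y\<in>?W. QY Y * (\<Sum>\<sigma>\<in>?C. A Y \<sigma>)) +
        (\<Sum>\<sigma>\<in>?C. \<Sum>Y\<in>?W. exp (-s*\<gamma>) * T \<sigma> Y * A Y \<sigma>)"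
    by (simp add: sum.distrib sum_distrib_left sum.swap[of _ ?C] mult.assoc)
  also have "(\<Sum>Y\<in>?W. QY Y * (\<Sum>\<sigma>\<in>?C. A Y \<sigma>)) \<le> (\<Sum>Y\<in>?W. QY Y)"
    using As QYp by (intro sum_mono) (simp add: less_imp_le mult_left_le)
  also have "(\<Sum>Y\<in>?W. QY Y) = 1"
    unfolding QY_def using sum_pow_prod[of "\<lambda>i b. Qf b" m] Q by simp
  also have "(\<Sum>\<sigma>\<in>?C. \<Sum>Y\<in>?W. exp (-s*\<gamma>) * T \<sigma> Y * A Y \<sigma>) \<le> (\<Sum>\<sigma>\<in>?C. \<Sum>Y\<in>?W. exp (-s*\<gamma>) * T \<sigma> Y)"
  proof (intro sum_mono)
    fix \<sigma> Y assume "\<sigma> \<in> ?C"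
    hence "A Y \<sigma> \<le> 1" by (rule A1)
    moreover have "0 \<le> exp (-s*\<gamma>) * T \<sigma> Y" unfolding T_def using gn by (simp add: prod_nonneg)
    ultimately show "exp (-s*\<gamma>) * T \<sigma> Y * A Y \<sigma> \<le> exp (-s*\<gamma>) * T \<sigma> Y"
      by (simp add: mult_left_le)
  qed
  also have "\<dots> = (\<Sum>\<sigma>\<in>?C. exp (-s*\<gamma>) * (\<Prod>i<m. g \<sigma> i True + g \<sigma> i False))"
    unfolding T_def by (simp add: sum_distrib_left[symmetric] sum_pow_prod)
  also have "\<dots> \<le> (\<Sum>\<sigma>\<in>?C. exp (-s*\<gamma>) * B ^ m)"
  proof (intro sum_mono mult_left_mono)
    fix \<sigma>
    have "(\<Prod>i<m. g \<sigma> i True + g \<sigma> i False) \<le> (\<Prod>i<m. B)"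
      using gn by (intro prod_mono conjI add_nonneg_nonneg) (auto simp: g_def fb)
    thus "(\<Prod>i<m. g \<sigma> i True + g \<sigma> i False) \<le> B ^ m" by simp
  qed simp
  also have "\<dots> = real (n choose k) * (exp (-s*\<gamma>) * B ^ m)"
    by (simp add: card_configs)
  finally have main: "(\<Sum>\<sigma>\<in>?C. \<Sum>Y\<in>?W. P \<sigma> Y * A Y \<sigma>) \<le> exp \<gamma> + real (n choose k) * (exp (-s*\<gamma>) * B ^ m)"
    by simp
  have Np: "0 < real (n choose k)" using kn by simp
  have "success_prob p q n k m G A = (\<Sum>\<sigma>\<in>?C. \<Sum>Y\<in>?W. P \<sigma> Y * A Y \<sigma>) / real (n choose k)"
    unfolding success_prob_def P_def by simp
  also have "\<dots> \<le> (exp \<gamma> + real (n choose k) * (exp (-s*\<gamma>) * B ^ m)) / real (n choose k)"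
    using main Np by (intro divide_right_mono) auto
  also have "\<dots> = exp \<gamma> / real (n choose k) + exp (-s*\<gamma>) * B ^ m"
    using Np by (simp add: add_divide_distrib)
  finally show ?thesis .
qed

lemma deriv_term:
  fixes w Qv :: real
  assumes "0 \<le> w" "0 < Qv"
  shows "((\<lambda>s. w * (w/Qv) powr s) has_real_derivative (if w = 0 then 0 else w * ln (w/Qv))) (at 0)"
proof (cases "w = 0")
  case True thus ?thesis by simp
next
  case False
  hence wp: "0 < w/Qv" using assms by simp
  have eq: "(\<lambda>s. w * (w/Qv) powr s) = (\<lambda>s. w * exp (s * ln (w/Qv)))"
    using False assms by (simp add: powr_def)
  have "((\<lambda>s. w * exp (s * ln (w/Qv))) has_real_derivative w * (exp (0 * ln (w/Qv)) * (1 * ln (w/Qv)))) (at 0)"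
    by (rule DERIV_cmult, rule DERIV_fun_exp, rule DERIV_cmult_right, rule DERIV_ident)
  thus ?thesis using False by (simp add: eq)
qed

lemma small_s:
  fixes w0 w1 Q0 Q1 D c :: real
  assumes "0 \<le> w0" "0 \<le> w1" "w0 + w1 = 1" "0 < Q0" "0 < Q1"
    and "D = (if w1 = 0 then 0 else w1 * ln (w1/Q1)) + (if w0 = 0 then 0 else w0 * ln (w0/Q0))"
    and "D < c"
  shows "\<forall>\<^sub>F s in at_right 0. w1 * (w1/Q1) powr s + w0 * (w0/Q0) powr s \<le> exp (s * c)"
proof -
  define f where "f s = w1 * (w1/Q1) powr s + w0 * (w0/Q0) powr s" for s :: real
  have d: "(f has_real_derivative D) (at 0)"
    unfolding f_def assms(6) using assms by (intro DERIV_add deriv_term) auto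
  have f0: "f 0 = 1" unfolding f_def using assms by auto
  have "((\<lambda>y. (f y - f 0) / (y - 0)) \<longlongrightarrow> D) (at 0)"
    using d by (simp add: has_field_derivative_iff)
  hence "((\<lambda>y. (f y - 1) / y) \<longlongrightarrow> D) (at 0)"
    using f0 by simp
  hence "((\<lambda>y. (f y - 1) / y) \<longlongrightarrow> D) (at_right 0)"
    by (rule tendsto_mono[OF at_le[OF subset_UNIV]])
  hence ev: "\<forall>\<^sub>F y in at_right 0. (f y - 1) / y < c" using assms(7) by (rule order_tendstoD(2))
  have ev2: "\<forall>\<^sub>F y in at_right (0::real). 0 < y" by (simp add: eventually_at_right_less)
  show ?thesis using ev ev2 unfolding f_def[symmetric]
  proof eventually_elim
    case (elim y)
    hence "f y - 1 < c * y" by (simp add: pos_divide_less_eq)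
    hence "f y \<le> 1 + y * c" by (simp add: algebra_simps)
    also have "\<dots> \<le> exp (y * c)" by (rule exp_ge_add_one_self)
    finally show ?case .
  qed
qed

lemma term_eq:
  fixes a b :: real
  assumes "0 \<le> a" "0 < b"
  shows "(if a = 0 then 0 else a * ln (a / b)) = xlnx a - a * ln b"
  using assms by (auto simp: xlnx_def ln_div right_diff_distrib)

lemma DKL_nonneg:
  fixes q s :: real
  assumes "0 \<le> q" "q < 1" "0 < s" "s < 1"
  shows "0 \<le> DKL q s"
proof -
  have t2: "(1 - q) * ln ((1 - q) / (1 - s)) \<ge> (1 - q) - (1 - s)"
  proof -
    have "ln ((1 - s) / (1 - q)) \<le> (1 - s) / (1 - q) - 1" using assms by (intro ln_le_minus_one) auto
    moreover have "ln ((1 - q) / (1 - s)) = - ln ((1 - s) / (1 - q))" using assms by (simp add: ln_div)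
    ultimately have "ln ((1 - q) / (1 - s)) \<ge> 1 - (1 - s) / (1 - q)" by linarith
    hence "(1 - q) * ln ((1 - q) / (1 - s)) \<ge> (1 - q) * (1 - (1 - s) / (1 - q))"
      using assms by (intro mult_left_mono) auto
    moreover have "(1 - q) * (1 - (1 - s) / (1 - q)) = (1 - q) - (1 - s)" using assms by (simp add: field_simps)
    ultimately show ?thesis by linarith
  qed
  have t1: "(if q = 0 then 0 else q * ln (q / s)) \<ge> q - s"
  proof (cases "q = 0")
    case True thus ?thesis using assms by simp
  next
    case False
    hence qp: "0 < q" using assms by simp
    have "ln (s / q) \<le> s / q - 1" using assms qp by (intro ln_le_minus_one) auto
    moreover have "ln (q / s) = - ln (s / q)" using assms qp by (simp add: ln_div)
    ultimately have "ln (q / s) \<ge> 1 - s / q" by linarith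
    hence "q * ln (q / s) \<ge> q * (1 - s / q)" using qp by (intro mult_left_mono) auto
    thus ?thesis using qp False by (simp add: algebra_simps)
  qed
  show ?thesis unfolding DKL_def using t1 t2 assms by simp
qed

lemma sv_facts:
  fixes \<phi> :: real
  defines "sv \<equiv> 1 / (1 + exp \<phi>)"
  shows "0 < sv" "sv < 1" "1 - sv = exp \<phi> * sv" "ln (1 - sv) = \<phi> + ln sv"
proof -
  have e0: "0 < exp \<phi>" by simp
  hence e: "0 < exp \<phi>" "0 < 1 + exp \<phi>" by linarith+
  show "0 < sv" unfolding sv_def using e by simp
  show "sv < 1" unfolding sv_def using e by simp
  show eq: "1 - sv = exp \<phi> * sv" unfolding sv_def using e by (simp add: field_simps)
  have "0 < sv" unfolding sv_def using e by simp
  thus "ln (1 - sv) = \<phi> + ln sv" using eq by (simp add: ln_mult)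
qed

lemma div_identities:
  fixes p q :: real
  assumes "0 \<le> p" "0 \<le> q" "p + q < 1"
  defines "sv \<equiv> 1 / (1 + exp (phi p q))"
  shows "(if 1 - q = 0 then 0 else (1 - q) * ln ((1 - q) / (1 - sv))) + (if q = 0 then 0 else q * ln (q / sv))
           = DKL q sv"
    and "(if p = 0 then 0 else p * ln (p / (1 - sv))) + (if 1 - p = 0 then 0 else (1 - p) * ln ((1 - p) / sv))
           = DKL q sv"
proof -
  have s: "0 < sv" "sv < 1" "ln (1 - sv) = phi p q + ln sv" unfolding sv_def using sv_facts by auto
  show "(if 1 - q = 0 then 0 else (1 - q) * ln ((1 - q) / (1 - sv))) + (if q = 0 then 0 else q * ln (q / sv))
           = DKL q sv" unfolding DKL_def using assms by simp
  have C: "DKL q sv = xlnx q - q * ln sv + (xlnx (1 - q) - (1 - q) * ln (1 - sv))"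
    unfolding DKL_def using assms s term_eq[of q sv] term_eq[of "1 - q" "1 - sv"] by auto
  have D: "(if p = 0 then 0 else p * ln (p / (1 - sv))) + (if 1 - p = 0 then 0 else (1 - p) * ln ((1 - p) / sv))
       = xlnx p - p * ln (1 - sv) + (xlnx (1 - p) - (1 - p) * ln sv)"
    using assms s term_eq[of p "1 - sv"] term_eq[of "1 - p" sv] by auto
  have ph: "phi p q * (1 - p - q) = - xlnx p - xlnx (1 - p) + xlnx q + xlnx (1 - q)"
    unfolding phi_def bin_entropy_def using assms by simp
  show "(if p = 0 then 0 else p * ln (p / (1 - sv))) + (if 1 - p = 0 then 0 else (1 - p) * ln ((1 - p) / sv))
           = DKL q sv"
    unfolding C D s(3) using ph by (simp add: algebra_simps)
qed

lemma asym_L: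
  fixes \<theta> M :: real and k :: "nat \<Rightarrow> nat"
  assumes "0 < \<theta>" "\<theta> < 1" "(\<lambda>n. real (k n) / real n powr \<theta>) \<longlonglongrightarrow> 1"
  shows "\<forall>\<^sub>F n in sequentially. 1 \<le> k n \<and> k n \<le> n \<and> M \<le> real (k n) * ln (real n / real (k n))"
proof -
  have l1: "filterlim (\<lambda>n. real n powr \<theta>) at_top sequentially"
    by (rule filterlim_compose[OF real_powr_at_top[OF assms(1)] filterlim_real_sequentially])
  have l2: "filterlim (\<lambda>n. real n powr (1 - \<theta>)) at_top sequentially"
    using assms by (intro filterlim_compose[OF real_powr_at_top filterlim_real_sequentially]) auto
  have e1: "\<forall>\<^sub>F n in sequentially. 2 * max 1 M \<le> real n powr \<theta>" using l1 by (simp add: filterlim_at_top)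
  have e2: "\<forall>\<^sub>F n in sequentially. 2 * exp 1 \<le> real n powr (1 - \<theta>)" using l2 by (simp add: filterlim_at_top)
  have e3: "\<forall>\<^sub>F n in sequentially. real (k n) / real n powr \<theta> > 1/2" using assms(3) by (rule order_tendstoD) simp
  have e4: "\<forall>\<^sub>F n in sequentially. real (k n) / real n powr \<theta> < 2" using assms(3) by (rule order_tendstoD) simp
  have e5: "\<forall>\<^sub>F n in sequentially. 1 \<le> n" by (rule eventually_ge_at_top)
  show ?thesis using e1 e2 e3 e4 e5
  proof eventually_elim
    case (elim n)
    let ?a = "real n powr \<theta>"
    have np: "0 < real n" using elim by simp
    have ap: "0 < ?a" using np by simp
    have k1: "?a / 2 < real (k n)" using elim ap by (simp add: field_simps)
    have k2: "real (k n) < 2 * ?a" using elim ap by (simp add: field_simps)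
    have kM: "max 1 M \<le> real (k n)" using k1 elim by linarith
    hence kp: "0 < real (k n)" by linarith
    have split: "real n = ?a * real n powr (1 - \<theta>)" using np by (simp add: powr_add[symmetric])
    have "exp 1 \<le> real n powr (1 - \<theta>) / 2" using elim by simp
    also have "real n powr (1 - \<theta>) / 2 = real n / (2 * ?a)" using split ap by (simp add: field_simps)
    also have "\<dots> \<le> real n / real (k n)" using k2 kp np by (intro divide_left_mono) auto
    finally have ratio: "exp 1 \<le> real n / real (k n)" .
    hence "ln (exp 1) \<le> ln (real n / real (k n))" using kp np by (subst ln_le_cancel_iff) auto
    hence lg: "1 \<le> ln (real n / real (k n))" by simp
    have "1 < real n / real (k n)" using ratio by (smt (verit) one_less_exp_iff)
    hence kn: "k n \<le> n" using kp by (simp add: field_simps)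
    have "M \<le> real (k n) * 1" using kM by simp
    also have "\<dots> \<le> real (k n) * ln (real n / real (k n))" using lg kp by (intro mult_left_mono) auto
    finally have "M \<le> real (k n) * ln (real n / real (k n))" .
    moreover have "1 \<le> k n" using kp by simp
    ultimately show ?case using kn by blast
  qed
qed

theorem theorem2p3:
  fixes \<theta> p q \<epsilon> :: real
    and k m :: "nat \<Rightarrow> nat"
    and G :: "nat \<Rightarrow> nat \<Rightarrow> nat set"
    and A :: "nat \<Rightarrow> nat set \<Rightarrow> nat set \<Rightarrow> real"
  assumes "0 < \<theta>" "\<theta> < 1"
    and "0 \<le> p" "0 \<le> q" "p + q < 1" "0 < \<epsilon>"
    and "(\<lambda>n. real (k n) / real n powr \<theta>) \<longlonglongrightarrow> 1"
    and "\<forall>\<^sub>F n in sequentially. real (m n) \<le> (1 - \<epsilon>) * m_count p q n (k n)"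
    and "\<And>n. valid_decoder n (k n) (A n)"
  shows "\<not> ((\<lambda>n. success_prob p q n (k n) (m n) (G n) (A n)) \<longlonglongrightarrow> 1)"
proof
  assume lim: "(\<lambda>n. success_prob p q n (k n) (m n) (G n) (A n)) \<longlonglongrightarrow> 1"
  define sv where "sv = 1 / (1 + exp (phi p q))"
  define C where "C = DKL q sv"
  define Qf where "Qf b = (if b then 1 - sv else sv)" for b
  have sv: "0 < sv" "sv < 1" unfolding sv_def using sv_facts by auto
  have Qp: "\<And>b. 0 < Qf b" "Qf True + Qf False = 1" unfolding Qf_def using sv by auto
  have pq: "0 \<le> p" "p < 1" "0 \<le> q" "q < 1" using assms by auto
  have C0: "0 \<le> C" unfolding C_def using pq sv by (intro DKL_nonneg) auto
  define e where "e = min \<epsilon> (1/2)"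
  have e: "0 < e" "e \<le> 1/2" "e \<le> \<epsilon>" unfolding e_def using assms by auto
  define \<eta> where "\<eta> = (if C > 0 then C * e / 2 else 1)"
  have \<eta>: "0 < \<eta>" unfolding \<eta>_def using e by auto
  have DT: "(if 1 - q = 0 then 0 else (1 - q) * ln ((1 - q) / Qf True)) + (if q = 0 then 0 else q * ln (q / Qf False)) = C"
    and DF: "(if p = 0 then 0 else p * ln (p / Qf True)) + (if 1 - p = 0 then 0 else (1 - p) * ln ((1 - p) / Qf False)) = C"
    unfolding C_def Qf_def sv_def using div_identities[OF assms(3,4,5)] by auto
  have evT: "\<forall>\<^sub>F s in at_right 0. (1 - q) * ((1 - q) / Qf True) powr s + q * (q / Qf False) powr s \<le> exp (s * (C + \<eta>))"
    using pq Qp \<eta> by (intro small_s[OF _ _ _ _ _ DT[symmetric]]) auto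
  have evF: "\<forall>\<^sub>F s in at_right 0. p * (p / Qf True) powr s + (1 - p) * ((1 - p) / Qf False) powr s \<le> exp (s * (C + \<eta>))"
    using pq Qp \<eta> by (intro small_s[OF _ _ _ _ _ DF[symmetric]]) auto
  have "\<forall>\<^sub>F s in at_right (0::real). 0 < s" by (simp add: eventually_at_right_less)
  with evT evF have "\<forall>\<^sub>F s in at_right (0::real). 0 < s \<and>
      (1 - q) * ((1 - q) / Qf True) powr s + q * (q / Qf False) powr s \<le> exp (s * (C + \<eta>)) \<and>
      p * (p / Qf True) powr s + (1 - p) * ((1 - p) / Qf False) powr s \<le> exp (s * (C + \<eta>))"
    by eventually_elim auto
  then obtain s where s: "0 < s"
    and sT: "(1 - q) * ((1 - q) / Qf True) powr s + q * (q / Qf False) powr s \<le> exp (s * (C + \<eta>))"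
    and sF: "p * (p / Qf True) powr s + (1 - p) * ((1 - p) / Qf False) powr s \<le> exp (s * (C + \<eta>))"
    using eventually_happens'[OF trivial_limit_at_right_real] by blast
  have fb: "obs_prob p q x True * (obs_prob p q x True / Qf True) powr s
              + obs_prob p q x False * (obs_prob p q x False / Qf False) powr s \<le> exp (s * (C + \<eta>))" for x
    using sT sF by (cases x) (auto simp: obs_prob_def)
  define M where "M = max (4 * ln 4 / e) (4 * ln 4 / (s * e))"
  have evL: "\<forall>\<^sub>F n in sequentially. 1 \<le> k n \<and> k n \<le> n \<and> M \<le> real (k n) * ln (real n / real (k n))"
    using assms(1,2,7) by (rule asym_L)
  have evS: "\<forall>\<^sub>F n in sequentially. success_prob p q n (k n) (m n) (G n) (A n) > 1/2"
    using lim by (rule order_tendstoD) simp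
  have "\<forall>\<^sub>F n in sequentially. False"
    using evL evS assms(8)
  proof eventually_elim
    case (elim n)
    define L where "L = real (k n) * ln (real n / real (k n))"
    define \<gamma> where "\<gamma> = (1 - e/4) * L"
    have kn: "k n \<le> n" "1 \<le> k n" and LM: "M \<le> L" using elim unfolding L_def by auto
    have L0: "0 \<le> L" using LM e s unfolding M_def by (smt (verit) divide_nonneg_pos ln_ge_zero mult_pos_pos)
    have bound: "success_prob p q n (k n) (m n) (G n) (A n) \<le>
        exp \<gamma> / real (n choose k n) + exp (-s*\<gamma>) * exp (s * (C + \<eta>)) ^ m n"
      using pq Qp s assms(9) kn fb by (intro core_bound) auto
    have kp: "0 < real (k n)" using kn by simp
    have np: "0 < real n" using kn by simp
    have "exp L = (real n / real (k n)) ^ k n"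
      unfolding L_def using kp np by (simp add: exp_of_nat_mult)
    also have "\<dots> \<le> real (n choose k n)" using kn(1) by (rule binomial_ge_n_over_k_pow_k)
    finally have NL: "exp L \<le> real (n choose k n)" .
    have "exp \<gamma> / real (n choose k n) \<le> exp \<gamma> / exp L"
      using NL kn(1) by (intro divide_left_mono) auto
    also have "\<dots> = exp (- (e/4 * L))" unfolding \<gamma>_def by (simp add: exp_diff[symmetric] algebra_simps)
    also have "\<dots> \<le> exp (- ln 4)"
    proof -
      have "4 * ln 4 / e \<le> L" using LM unfolding M_def by linarith
      hence "ln 4 \<le> e/4 * L" using e by (simp add: field_simps)
      thus ?thesis by simp
    qed
    finally have t1: "exp \<gamma> / real (n choose k n) \<le> 1/4" by (simp add: exp_minus)
    have mC: "real (m n) * (C + \<eta>) \<le> (1 - e/2) * L"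
    proof (cases "C > 0")
      case True
      have mc: "m_count p q n (k n) = L / C" unfolding m_count_def L_def C_def sv_def by simp
      have "real (m n) \<le> (1 - \<epsilon>) * (L / C)" using elim mc by simp
      also have "\<dots> \<le> (1 - e) * (L / C)" using e L0 True by (intro mult_right_mono) auto
      finally have "real (m n) * C \<le> (1 - e) * L" using True by (simp add: field_simps)
      hence "real (m n) * C * (1 + e/2) \<le> (1 - e) * L * (1 + e/2)" using e by (intro mult_right_mono) auto
      also have "\<dots> \<le> (1 - e/2) * L"
      proof -
        have "(1 - e) * (1 + e/2) \<le> 1 - e/2" using e by (simp add: algebra_simps)
        hence "(1 - e) * (1 + e/2) * L \<le> (1 - e/2) * L" using L0 by (rule mult_right_mono)
        thus ?thesis by (simp add: algebra_simps)
      qed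
      finally show ?thesis using True unfolding \<eta>_def by (simp add: algebra_simps)
    next
      case False
      hence "C = 0" using C0 by simp
      hence "m_count p q n (k n) = 0" unfolding m_count_def C_def sv_def by simp
      hence "m n = 0" using elim by simp
      thus ?thesis using L0 e by simp
    qed
    have "exp (-s*\<gamma>) * exp (s * (C + \<eta>)) ^ m n = exp (-s*\<gamma> + s * (real (m n) * (C + \<eta>)))"
      by (simp add: exp_of_nat_mult[symmetric] exp_add[symmetric] algebra_simps)
    also have "\<dots> \<le> exp (- (s * e / 4 * L))"
    proof -
      have "s * (real (m n) * (C + \<eta>)) \<le> s * ((1 - e/2) * L)" using mC s by (intro mult_left_mono) auto
      thus ?thesis unfolding \<gamma>_def by (simp add: algebra_simps)
    qed
    also have "\<dots> \<le> exp (- ln 4)"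
    proof -
      have "4 * ln 4 / (s * e) \<le> L" using LM unfolding M_def by linarith
      hence "ln 4 \<le> s * e / 4 * L" using e s by (simp add: field_simps)
      thus ?thesis by simp
    qed
    finally have t2: "exp (-s*\<gamma>) * exp (s * (C + \<eta>)) ^ m n \<le> 1/4" by (simp add: exp_minus)
    show False using bound t1 t2 elim by linarith
  qed
  thus False by simp
qed

end
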